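(* There exists a constant $C=C(\underline h,\overline h,\underline w,\overline w)>0$ such that for every grid size $N\in\mathbb{N}$ there exists a ReLU FNO $\mathcal{N}^{\mathrm{FNO}}$ with constant (in $x$) output function, $k_{\max}=0$, $d_v\le C$, depth $\le C$, size $\le C$, such that for every input $\bar u=h\,1_{[-w/2,w/2]}(\cdot-\xi)$ with $h\in[\underline h,\overline h]$, $w\in[\underline w,\overline w]$, $\xi\in[0,2\pi]$, \[ \big|\mathcal{N}^{\mathrm{FNO}}(\bar u)(x)-w\big|\le\frac CN\quad\text{for all }x\in\mathbb{T}. \]
   Context: $\mathbb{T}=\mathbb{R}/2\pi\mathbb{Z}$; $0<\underline h<\overline h$, $0<\underline w<\overline w<2\pi$; $1_{[-w/2,w/2]}$ is periodized. FNO with grid size $N$: $x_j=2\pi j/N$, $\mathcal{F}_Nv(k)=\frac1N\sum_{j=1}^Nv(x_j)e^{-ikx_j}$; an FNO with lifting dimension $d_v$, cut-off $k_{\max}$, depth $L$, ReLU $\sigma$ is $Q\circ\mathcal{L}_L\circ\dots\circ\mathcal{L}_1\circ R$, $(R\bar u)(x)=R(\bar u(x),x)$ ($R$ a shallow ReLU network into $\mathbb{R}^{d_v}$), $(\mathcal{L}_\ell v)(x)=\sigma(W_\ell v(x)+b_\ell(x)+\sum_{|k|\le k_{\max}}P_\ell(k)\mathcal{F}_Nv(k)e^{ikx})$ with $W_\ell\in\mathbb{R}^{d_v\times d_v}$, $P_\ell(k)\in\mathbb{C}^{d_v\times d_v}$, real bias $b_\ell(x)=\sum_{|k|\le k_{\max}}\hat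 b_\ell(k)e^{ikx}$, $Q$ linear pointwise. Depth $=L$; size = number of tunable parameters. *)

theory Defs
  imports Complex_Main
begin

definition relu :: "real \<Rightarrow> real" where
  "relu t = max 0 t"

text \<open>Vectors in R^d are functions nat => real (only indices < d matter),
  matrices are functions nat => nat => real.
  Lifting R(u,x) = B relu(A (u,x) + a) + c is a shallow ReLU network with hidden width
  fno_width; A is width x 2, a has width entries, B is d_v x width, c has d_v entries.
  Each layer is (W, P, bhat): W is d_v x d_v real, P k is d_v x d_v complex,
  bhat k is the k-th Fourier coefficient (a complex vector) of the bias.\<close>
record fno =
  fno_dv :: nat
  fno_kmax :: nat
  fno_width :: nat
  fno_A :: "nat \<Rightarrow> nat \<Rightarrow> real"
  fno_a :: "nat \<Rightarrow> real"
  fno_B :: "nat \<Rightarrow> nat \<Rightarrow> real"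
  fno_c :: "nat \<Rightarrow> real"
  fno_layers :: "((nat \<Rightarrow> nat \<Rightarrow> real) \<times> (int \<Rightarrow> nat \<Rightarrow> nat \<Rightarrow> complex) \<times> (int \<Rightarrow> nat \<Rightarrow> complex)) list"
  fno_Q :: "nat \<Rightarrow> real"

definition grid_pt :: "nat \<Rightarrow> nat \<Rightarrow> real" where
  "grid_pt N j = 2 * pi * real j / real N"

definition dft :: "nat \<Rightarrow> (real \<Rightarrow> real) \<Rightarrow> int \<Rightarrow> complex" where
  "dft N v k = (1 / of_nat N) *
     (\<Sum>j = 1..N. complex_of_real (v (grid_pt N j)) * exp (- \<i> * of_int k * complex_of_real (grid_pt N j)))"

definition fno_lift :: "fno \<Rightarrow> (real \<Rightarrow> real) \<Rightarrow> real \<Rightarrow> nat \<Rightarrow> real" where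
  "fno_lift F u x i =
     (\<Sum>j<fno_width F. fno_B F i j * relu (fno_A F j 0 * u x + fno_A F j 1 * x + fno_a F j)) + fno_c F i"

definition fno_layer ::
  "nat \<Rightarrow> nat \<Rightarrow> nat \<Rightarrow> ((nat \<Rightarrow> nat \<Rightarrow> real) \<times> (int \<Rightarrow> nat \<Rightarrow> nat \<Rightarrow> complex) \<times> (int \<Rightarrow> nat \<Rightarrow> complex))
     \<Rightarrow> (real \<Rightarrow> nat \<Rightarrow> real) \<Rightarrow> real \<Rightarrow> nat \<Rightarrow> real" where
  "fno_layer dv kmax N l v x i =
     (case l of (W, P, bh) \<Rightarrow>
       relu ((\<Sum>j<dv. W i j * v x j) +
             Re (\<Sum>k\<in>{- int kmax..int kmax}.
                   (bh k i + (\<Sum>j<dv. P k i j * dft N (\<lambda>y. v y j) k))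
                   * exp (\<i> * of_int k * complex_of_real x))))"

definition fno_eval :: "fno \<Rightarrow> nat \<Rightarrow> (real \<Rightarrow> real) \<Rightarrow> real \<Rightarrow> real" where
  "fno_eval F N u x =
     (let v = foldl (\<lambda>v l. fno_layer (fno_dv F) (fno_kmax F) N l v) (fno_lift F u) (fno_layers F)
      in \<Sum>i<fno_dv F. fno_Q F i * v x i)"

definition fno_depth :: "fno \<Rightarrow> nat" where
  "fno_depth F = length (fno_layers F)"

text \<open>Size = number of tunable (real) parameters; complex parameters count twice.\<close>
definition fno_size :: "fno \<Rightarrow> nat" where
  "fno_size F =
     (let m = fno_width F; d = fno_dv F; K = 2 * fno_kmax F + 1 in
      2 * m + m + d * m + d
      + fno_depth F * (d * d + 2 * K * d * d + 2 * K * d)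
      + d)"

definition per_ind :: "real \<Rightarrow> real \<Rightarrow> real" where
  "per_ind w t = (if \<exists>k::int. \<bar>t - 2 * pi * of_int k\<bar> \<le> w / 2 then 1 else 0)"

end

theory Submission imports Defs begin

definition myF :: "real \<Rightarrow> fno" where
 "myF hl = \<lparr>fno_dv = 1, fno_kmax = 0, fno_width = 2,
   fno_A = (\<lambda>j i. if i = 0 then 1/hl else 0),
   fno_a = (\<lambda>j. if j = 0 then 0 else -1),
   fno_B = (\<lambda>i j. if j = 0 then 1 else -1),
   fno_c = (\<lambda>_. 0),
   fno_layers = [(\<lambda>_ _. 0, \<lambda>_ _ _. complex_of_real (2*pi), \<lambda>_ _. 0)],
   fno_Q = (\<lambda>_. 1)\<rparr>"

lemma dft0: "dft N v 0 = complex_of_real ((1/real N) * (\<Sum>j=1..N. v (grid_pt N j)))"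
  by (simp add: dft_def)

lemma eval_myF: "fno_eval (myF hl) N u x =
   relu (2*pi * ((1/real N) * (\<Sum>j=1..N. fno_lift (myF hl) u (grid_pt N j) 0)))"
  by (simp add: fno_eval_def fno_layer_def myF_def dft0 del: of_real_mult)

lemma size_myF: "fno_size (myF hl) = 15" "fno_depth (myF hl) = 1"
  by (simp_all add: fno_size_def fno_depth_def myF_def)

lemma lift_myF:
  assumes "0 < hl" "hl \<le> h" "q y = 0 \<or> q y = 1"
  shows "fno_lift (myF hl) (\<lambda>t. h * q t) y 0 = q y"
  using assms
  by (auto simp: fno_lift_def myF_def relu_def numeral_2_eq_2 lessThan_Suc field_simps)

lemma count_bound:
  fixes N :: nat and w \<xi> :: real
  assumes N: "N \<ge> 1" and w: "0 < w" "w < 2*pi"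
  defines "T \<equiv> {j\<in>{1..N}. \<exists>k::int. \<bar>grid_pt N j - \<xi> - 2*pi*of_int k\<bar> \<le> w/2}"
  shows "\<bar>2*pi*real (card T)/real N - w\<bar> \<le> 2*pi/real N"
proof -
  define a where "a = real N * (\<xi> - w/2) / (2*pi)"
  define b where "b = real N * (\<xi> + w/2) / (2*pi)"
  define S where "S = {ceiling a .. floor b}"
  have Npos: "real N > 0" using N by simp
  have ba: "b - a = real N * w / (2*pi)" unfolding a_def b_def by (simp add: field_simps)
  have baN: "b - a < real N" unfolding ba using w Npos pi_gt_zero
    by (simp add: field_simps)
  have memS: "n \<in> S \<longleftrightarrow> a \<le> of_int n \<and> of_int n \<le> b" for n
    unfolding S_def by (simp add: ceiling_le_iff le_floor_iff)
  have key: "\<bar>grid_pt N j - \<xi> - 2*pi*of_int k\<bar> \<le> w/2 \<longleftrightarrow> (j - k*int N) \<in> S" for j k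
  proof -
    have eq: "grid_pt N j - \<xi> - 2*pi*of_int k = 2*pi/real N * (of_int (int j - k*int N)) - \<xi>"
      using Npos by (simp add: grid_pt_def field_simps)
    have "\<bar>grid_pt N j - \<xi> - 2*pi*of_int k\<bar> \<le> w/2 \<longleftrightarrow>
       \<xi> - w/2 \<le> 2*pi/real N * (of_int (int j - k*int N)) \<and> 2*pi/real N * (of_int (int j - k*int N)) \<le> \<xi> + w/2"
      unfolding eq abs_le_iff by (rule iffI; (elim conjE)?; intro conjI; linarith)
    also have "\<dots> \<longleftrightarrow> a \<le> of_int (int j - k*int N) \<and> of_int (int j - k*int N) \<le> b"
      unfolding a_def b_def using Npos pi_gt_zero
      by (simp add: field_simps)
    finally show ?thesis using memS by simp
  qed
  define f where "f n = nat ((n - 1) mod int N + 1)" for n :: int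
  have inj: "inj_on f S"
  proof
    fix n n' assume nS: "n \<in> S" and n'S: "n' \<in> S" and e: "f n = f n'"
    have "(n - 1) mod int N = (n' - 1) mod int N"
      using e N unfolding f_def by (simp add: nat_eq_iff2) 
    hence "int N dvd ((n - 1) - (n' - 1))"
      by (simp only: mod_eq_dvd_iff)
    hence "int N dvd (n - n')" by simp
    then obtain c where c: "n - n' = int N * c" by (auto simp: dvd_def)
    have "\<bar>real_of_int (n - n')\<bar> \<le> b - a" using nS n'S memS by auto
    moreover have "real_of_int (n - n') = real N * real_of_int c"
      using arg_cong[OF c, of real_of_int] by simp
    ultimately have "\<bar>real N * real_of_int c\<bar> < real N" using baN by linarith
    hence "\<bar>real_of_int c\<bar> < 1" using Npos by (simp add: abs_mult)
    hence "c = 0" by linarith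
    thus "n = n'" using c by simp
  qed
  have img: "f ` S = T"
  proof
    show "f ` S \<subseteq> T"
    proof
      fix j assume "j \<in> f ` S"
      then obtain n where nS: "n \<in> S" and j: "j = f n" by auto
      define q where "q = (n - 1) div int N"
      have m0: "(n-1) mod int N \<ge> 0" using N by simp
      have "int j = (n-1) mod int N + 1" unfolding j f_def using m0 by simp
      moreover have "(n-1) mod int N = (n-1) - int N * q" unfolding q_def
        by (simp add: minus_mult_div_eq_mod)
      ultimately have jn: "int j = n - int N * q" by simp
      have "(n-1) mod int N < int N" using N by simp
      hence "int j \<ge> 1" "int j \<le> int N" using m0 \<open>int j = (n-1) mod int N + 1\<close> by linarith+
      hence j1: "j \<in> {1..N}" by simp
      have "int j - (-q) * int N \<in> S" using nS jn by (simp add: algebra_simps)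
      hence "\<bar>grid_pt N j - \<xi> - 2*pi*of_int (-q)\<bar> \<le> w/2" using key by blast
      thus "j \<in> T" unfolding T_def using j1 by blast
    qed
    show "T \<subseteq> f ` S"
    proof
      fix j assume "j \<in> T"
      then obtain k where j1: "j \<in> {1..N}" and k: "\<bar>grid_pt N j - \<xi> - 2*pi*of_int k\<bar> \<le> w/2"
        unfolding T_def by blast
      have nS: "int j - k * int N \<in> S" using key k by blast
      have e1: "int j - k * int N - 1 = (int j - 1) + (-k) * int N" by simp
      have "(int j - k * int N - 1) mod int N = (int j - 1) mod int N"
        unfolding e1 by (rule mod_mult_self1)
      also have "\<dots> = int j - 1" using j1 by (simp add: mod_pos_pos_trivial)
      finally have "f (int j - k * int N) = j" unfolding f_def using j1 by simp
      thus "j \<in> f ` S" using nS by force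
    qed
  qed
  have cardT: "card T = card S" using card_image[OF inj] img by simp
  have "real N * w / (2*pi) \<ge> 0" using Npos w pi_gt_zero by simp
  hence ab: "a \<le> b" using ba by linarith
  have cS: "card S = nat (floor b - ceiling a + 1)" unfolding S_def by simp
  have nn: "floor b - ceiling a + 1 \<ge> 0"
    using ab by linarith
  have rc: "real (card S) = real_of_int (floor b - ceiling a + 1)"
    using cS nn by simp
  have lo: "real (card S) \<ge> b - a - 1" "real (card S) \<le> b - a + 1"
    unfolding rc using floor_le_iff le_ceiling_iff by linarith+
  have "\<bar>real (card T) - real N * w / (2*pi)\<bar> \<le> 1" using lo cardT ba by auto
  hence "\<bar>2*pi/real N\<bar> * \<bar>real (card T) - real N * w / (2*pi)\<bar> \<le> \<bar>2*pi/real N\<bar>"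
    by (intro mult_left_le) auto
  hence "\<bar>2*pi/real N * (real (card T) - real N * w / (2*pi))\<bar> \<le> 2*pi/real N"
    using Npos by (simp add: abs_mult)
  moreover have "2*pi/real N * (real (card T) - real N * w / (2*pi)) = 2*pi*real (card T)/real N - w"
    using Npos by (simp add: field_simps)
  ultimately show ?thesis by metis
qed

lemma sum_card:
  "(\<Sum>j=1..N. per_ind w (grid_pt N j - \<xi>)) =
   real (card {j\<in>{1..N}. \<exists>k::int. \<bar>grid_pt N j - \<xi> - 2*pi*of_int k\<bar> \<le> w/2})"
  unfolding per_ind_def by (simp add: sum.If_cases Int_def)

theorem mainTheorem12:
  fixes hl hu wl wu :: real
  assumes "0 < hl" "hl < hu" "0 < wl" "wl < wu" "wu < 2 * pi"
  shows "\<exists>C::real. C > 0 \<and>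
    (\<forall>N::nat. N \<ge> 1 \<longrightarrow>
      (\<exists>F::fno. fno_kmax F = 0 \<and> real (fno_dv F) \<le> C \<and> real (fno_depth F) \<le> C
         \<and> real (fno_size F) \<le> C
         \<and> (\<forall>u x y. fno_eval F N u x = fno_eval F N u y)
         \<and> (\<forall>h w \<xi>. hl \<le> h \<and> h \<le> hu \<and> wl \<le> w \<and> w \<le> wu \<and> 0 \<le> \<xi> \<and> \<xi> \<le> 2 * pi \<longrightarrow>
              (\<forall>x. \<bar>fno_eval F N (\<lambda>t. h * per_ind w (t - \<xi>)) x - w\<bar> \<le> C / real N))))"
proof (intro exI[of _ 16] conjI allI impI)
  fix N :: nat assume N: "N \<ge> 1"
  let ?F = "myF hl"
  show "\<exists>F::fno. fno_kmax F = 0 \<and> real (fno_dv F) \<le> 16 \<and> real (fno_depth F) \<le> 16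
         \<and> real (fno_size F) \<le> 16
         \<and> (\<forall>u x y. fno_eval F N u x = fno_eval F N u y)
         \<and> (\<forall>h w \<xi>. hl \<le> h \<and> h \<le> hu \<and> wl \<le> w \<and> w \<le> wu \<and> 0 \<le> \<xi> \<and> \<xi> \<le> 2 * pi \<longrightarrow>
              (\<forall>x. \<bar>fno_eval F N (\<lambda>t. h * per_ind w (t - \<xi>)) x - w\<bar> \<le> 16 / real N))"
  proof (intro exI[of _ ?F] conjI allI impI)
    show "fno_kmax ?F = 0" "real (fno_dv ?F) \<le> 16" by (simp_all add: myF_def)
    show "real (fno_depth ?F) \<le> 16" "real (fno_size ?F) \<le> 16" by (simp_all add: size_myF)
    show "fno_eval ?F N u x = fno_eval ?F N u y" for u x y by (simp add: eval_myF)
    fix h w \<xi> x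
    assume H: "hl \<le> h \<and> h \<le> hu \<and> wl \<le> w \<and> w \<le> wu \<and> 0 \<le> \<xi> \<and> \<xi> \<le> 2 * pi"
    define T where "T = {j\<in>{1..N}. \<exists>k::int. \<bar>grid_pt N j - \<xi> - 2*pi*of_int k\<bar> \<le> w/2}"
    have q01: "per_ind w (t - \<xi>) = 0 \<or> per_ind w (t - \<xi>) = 1" for t
      by (simp add: per_ind_def)
    have lift: "fno_lift ?F (\<lambda>t. h * per_ind w (t - \<xi>)) y 0 = per_ind w (y - \<xi>)" for y
      using lift_myF[of hl h "\<lambda>t. per_ind w (t - \<xi>)" y] assms H q01 by simp
    have Npos: "real N > 0" using N by simp
    have ev: "fno_eval ?F N (\<lambda>t. h * per_ind w (t - \<xi>)) x = 2*pi*real (card T)/real N"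
      unfolding eval_myF lift sum_card T_def[symmetric] using Npos
      by (simp add: relu_def)
    have "\<bar>2*pi*real (card T)/real N - w\<bar> \<le> 2*pi/real N"
      unfolding T_def by (rule count_bound) (use N H assms in auto)
    also have "2*pi/real N \<le> 16/real N" using Npos pi_less_4
      by (simp add: divide_right_mono)
    finally show "\<bar>fno_eval ?F N (\<lambda>t. h * per_ind w (t - \<xi>)) x - w\<bar> \<le> 16 / real N"
      using ev by simp
  qed
qed simp
end
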